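(* Let $X$ be a directed graph, and let $X^0$ be the directed graph obtained from $X$ by adding an extra vertex $z$ and an edge from every vertex of $X^0$ to $z$. If $X$ is strongly $\delta$-hyperbolic then $X^0$ is strongly $\max(1,\delta)$-hyperbolic. Conversely, if $X^0$ is strongly $\delta$-hyperbolic then $X$ is strongly $\delta$-hyperbolic.
   Context: Directed graphs may have loops and multiple edges; $d(u,v)$ is the length of a shortest directed path from $u$ to $v$ ($\infty$ if none). Out-ball $\overrightarrow{\mathcal{B}}_r(x)=\{y : d(x,y)\le r\}$, in-ball $\overleftarrow{\mathcal{B}}_r(x)=\{y : d(y,x)\le r\}$, extended to sets by union. A path $[x_0,\dots,x_n]$ is a geodesic if $n=d(x_0,x_n)$. A directed geodesic triangle is an ordered triple $(p,q,r)$ of geodesics with the end of $p$ equal to the start of $q$ and $p\circ q$ having the same start and end as $r$; it is $\delta$-thin if every vertex of $r$ lies in $\overrightarrow{\mathcal{B}}_\delta(p)\cup\overleftarrow{\mathcal{B}}_\delta(q)$, every vertex of $p$ lies in $\overrightarrow{\mathcal{B}}_\delta(r)\cup\overleftarrow{\mathcal{B}}_\delta(q)$, and every vertex of $q$ lies in $\overrightarrow{\mathcal{B}}_\delta(p)\cup\overleftarrow{\mathcal{B}}_\delta(r)$. A directed graph is strongly $\delta$-hyperbolic if all its directed geodesic triangles are $\delta$-thin. *)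

theory Defs
  imports Main "HOL-Library.Extended_Nat"
begin

text \<open>A directed graph (loops allowed) is given by its vertex type and an adjacency
  relation E; E u v means there is at least one edge from u to v. Multiplicity of
  edges does not affect paths (as vertex sequences), distances or geodesics.\<close>

definition is_path :: "('a \<Rightarrow> 'a \<Rightarrow> bool) \<Rightarrow> 'a list \<Rightarrow> bool" where
  "is_path E xs \<longleftrightarrow> xs \<noteq> [] \<and> (\<forall>i. Suc i < length xs \<longrightarrow> E (xs ! i) (xs ! Suc i))"

definition dist :: "('a \<Rightarrow> 'a \<Rightarrow> bool) \<Rightarrow> 'a \<Rightarrow> 'a \<Rightarrow> enat" where
  "dist E u v = (INF xs \<in> {xs. is_path E xs \<and> hd xs = u \<and> last xs = v}. enat (length xs - 1))"

definition geodesic :: "('a \<Rightarrow> 'a \<Rightarrow> bool) \<Rightarrow> 'a list \<Rightarrow> bool" where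
  "geodesic E xs \<longleftrightarrow> is_path E xs \<and> enat (length xs - 1) = dist E (hd xs) (last xs)"

definition out_ball :: "('a \<Rightarrow> 'a \<Rightarrow> bool) \<Rightarrow> real \<Rightarrow> 'a set \<Rightarrow> 'a set" where
  "out_ball E r A = {y. \<exists>x\<in>A. \<exists>n. dist E x y = enat n \<and> real n \<le> r}"

definition in_ball :: "('a \<Rightarrow> 'a \<Rightarrow> bool) \<Rightarrow> real \<Rightarrow> 'a set \<Rightarrow> 'a set" where
  "in_ball E r A = {y. \<exists>x\<in>A. \<exists>n. dist E y x = enat n \<and> real n \<le> r}"

definition geodesic_triangle :: "('a \<Rightarrow> 'a \<Rightarrow> bool) \<Rightarrow> 'a list \<Rightarrow> 'a list \<Rightarrow> 'a list \<Rightarrow> bool" where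
  "geodesic_triangle E p q r \<longleftrightarrow> geodesic E p \<and> geodesic E q \<and> geodesic E r \<and>
     last p = hd q \<and> hd r = hd p \<and> last r = last q"

definition thin_triangle :: "('a \<Rightarrow> 'a \<Rightarrow> bool) \<Rightarrow> real \<Rightarrow> 'a list \<Rightarrow> 'a list \<Rightarrow> 'a list \<Rightarrow> bool" where
  "thin_triangle E \<delta> p q r \<longleftrightarrow>
     (\<forall>v\<in>set r. v \<in> out_ball E \<delta> (set p) \<union> in_ball E \<delta> (set q)) \<and>
     (\<forall>v\<in>set p. v \<in> out_ball E \<delta> (set r) \<union> in_ball E \<delta> (set q)) \<and>
     (\<forall>v\<in>set q. v \<in> out_ball E \<delta> (set p) \<union> in_ball E \<delta> (set r))"

definition strongly_hyperbolic :: "('a \<Rightarrow> 'a \<Rightarrow> bool) \<Rightarrow> real \<Rightarrow> bool" where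
  "strongly_hyperbolic E \<delta> \<longleftrightarrow>
     (\<forall>p q r. geodesic_triangle E p q r \<longrightarrow> thin_triangle E \<delta> p q r)"

text \<open>X^0: vertices 'a option, the new vertex z is None; an edge from every vertex
  (including z itself) to z.\<close>
fun cone_edge :: "('a \<Rightarrow> 'a \<Rightarrow> bool) \<Rightarrow> 'a option \<Rightarrow> 'a option \<Rightarrow> bool" where
  "cone_edge E (Some u) (Some v) = E u v"
| "cone_edge E _ None = True"
| "cone_edge E None (Some v) = False"

end

theory Submission
  imports Defs
begin

abbreviation "E0 E \<equiv> cone_edge E"

lemma path_None_after:
  assumes "is_path (cone_edge E) xs" "xs ! i = None" "i \<le> j" "j < length xs"
  shows "xs ! j = None"
  using assms(3,4)
proof (induction j)
  case 0 then show ?case using assms(2) by simp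
next
  case (Suc j)
  show ?case
  proof (cases "i = Suc j")
    case True then show ?thesis using assms(2) by simp
  next
    case False
    then have "xs ! j = None" using Suc by simp
    moreover have "cone_edge E (xs ! j) (xs ! Suc j)" using assms(1) Suc.prems unfolding is_path_def by blast
    ultimately show ?thesis by (cases "xs ! Suc j") auto
  qed
qed

lemma path_None_last:
  assumes "is_path (cone_edge E) xs" "None \<in> set xs"
  shows "last xs = None"
proof -
  obtain i where i: "i < length xs" "xs ! i = None" using assms(2) by (metis in_set_conv_nth)
  have ne: "xs \<noteq> []" using assms(1) unfolding is_path_def by blast
  have "xs ! (length xs - 1) = None"
    using path_None_after[OF assms(1) i(2)] i(1) by simp
  then show ?thesis using ne by (simp add: last_conv_nth)
qed

lemma path_map_Some: "is_path (cone_edge E) (map Some ys) \<longleftrightarrow> is_path E ys"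
  unfolding is_path_def by auto

lemma no_None_map: "None \<notin> set xs \<Longrightarrow> xs = map Some (map the xs)"
  by (induction xs) auto

lemma paths_eq:
  "{xs. is_path (cone_edge E) xs \<and> hd xs = Some u \<and> last xs = Some v}
   = map Some ` {ys. is_path E ys \<and> hd ys = u \<and> last ys = v}"
proof (intro equalityI subsetI)
  fix xs assume "xs \<in> {xs. is_path (cone_edge E) xs \<and> hd xs = Some u \<and> last xs = Some v}"
  then have xs: "is_path (cone_edge E) xs" "hd xs = Some u" "last xs = Some v" by auto
  have ne: "xs \<noteq> []" using xs(1) unfolding is_path_def by blast
  have "None \<notin> set xs" using path_None_last[OF xs(1)] xs(3) by auto
  then have eq: "xs = map Some (map the xs)" by (rule no_None_map)
  have "map the xs \<noteq> []" using ne by simp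
  moreover have "is_path E (map the xs)" using xs(1) eq path_map_Some by metis
  moreover have "hd (map the xs) = u" using xs(2) ne by (simp add: hd_map)
  moreover have "last (map the xs) = v" using xs(3) ne by (simp add: last_map)
  ultimately show "xs \<in> map Some ` {ys. is_path E ys \<and> hd ys = u \<and> last ys = v}"
    using eq by blast
next
  fix xs assume "xs \<in> map Some ` {ys. is_path E ys \<and> hd ys = u \<and> last ys = v}"
  then obtain ys where ys: "xs = map Some ys" "is_path E ys" "hd ys = u" "last ys = v" by auto
  have "ys \<noteq> []" using ys(2) unfolding is_path_def by blast
  then show "xs \<in> {xs. is_path (cone_edge E) xs \<and> hd xs = Some u \<and> last xs = Some v}"
    using ys by (simp add: path_map_Some hd_map last_map)
qed

lemma dist_Some: "dist (cone_edge E) (Some u) (Some v) = dist E u v"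
  unfolding dist_def paths_eq by (simp add: image_comp)

lemma dist_to_None: "\<exists>n. dist (cone_edge E) x None = enat n \<and> n \<le> 1"
proof -
  have "dist (cone_edge E) x None \<le> enat 1"
  proof (cases x)
    case None
    have "[None] \<in> {xs. is_path (cone_edge E) xs \<and> hd xs = x \<and> last xs = None}"
      using None by (simp add: is_path_def)
    then have "dist (cone_edge E) x None \<le> enat (length [None :: 'a option] - 1)"
      unfolding dist_def by (rule INF_lower)
    then show ?thesis by (simp add: enat_0)
  next
    case (Some a)
    have "[x, None] \<in> {xs. is_path (cone_edge E) xs \<and> hd xs = x \<and> last xs = None}"
      using Some by (auto simp add: is_path_def less_Suc_eq)
    then have "dist (cone_edge E) x None \<le> enat (length [x, None] - 1)"
      unfolding dist_def by (rule INF_lower)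
    then show ?thesis by simp
  qed
  then show ?thesis by (metis enat_ile enat_ord_simps(1))
qed

lemma in_ball_None:
  assumes "None \<in> A" "1 \<le> r"
  shows "x \<in> in_ball (cone_edge E) r A"
proof -
  obtain n where "dist (cone_edge E) x None = enat n" "n \<le> 1" using dist_to_None by blast
  then show ?thesis unfolding in_ball_def using assms by (intro CollectI bexI[of _ None]) force+
qed

lemma out_ball_Some: "Some y \<in> out_ball (cone_edge E) r (Some ` A) \<longleftrightarrow> y \<in> out_ball E r A"
  unfolding out_ball_def by (auto simp: dist_Some)

lemma in_ball_Some: "Some y \<in> in_ball (cone_edge E) r (Some ` A) \<longleftrightarrow> y \<in> in_ball E r A"
  unfolding in_ball_def by (auto simp: dist_Some)

lemma geodesic_Some: "geodesic (cone_edge E) (map Some ys) \<longleftrightarrow> geodesic E ys"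
proof (cases "ys = []")
  case True then show ?thesis by (simp add: geodesic_def is_path_def)
next
  case False then show ?thesis
    by (simp add: geodesic_def path_map_Some hd_map last_map dist_Some)
qed

lemma thin_Some:
  "thin_triangle (cone_edge E) d (map Some p) (map Some q) (map Some r) \<longleftrightarrow> thin_triangle E d p q r"
  unfolding thin_triangle_def by (simp add: out_ball_Some in_ball_Some)

lemma out_ball_mono: "d \<le> d' \<Longrightarrow> out_ball E d A \<subseteq> out_ball E d' A"
  unfolding out_ball_def by force

lemma in_ball_mono: "d \<le> d' \<Longrightarrow> in_ball E d A \<subseteq> in_ball E d' A"
  unfolding in_ball_def by force

lemma thin_mono: "thin_triangle E d p q r \<Longrightarrow> d \<le> d' \<Longrightarrow> thin_triangle E d' p q r"
  unfolding thin_triangle_def using out_ball_mono[of d d' E] in_ball_mono[of d d' E] by blast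

lemma geodesic_ne: "geodesic E xs \<Longrightarrow> xs \<noteq> []"
  unfolding geodesic_def is_path_def by blast

theorem proposition2p6:
  fixes E :: "'a \<Rightarrow> 'a \<Rightarrow> bool" and \<delta> :: real
  shows "(strongly_hyperbolic E \<delta> \<longrightarrow> strongly_hyperbolic (cone_edge E) (max 1 \<delta>))
       \<and> (strongly_hyperbolic (cone_edge E) \<delta> \<longrightarrow> strongly_hyperbolic E \<delta>)"
proof (intro conjI impI)
  assume H: "strongly_hyperbolic E \<delta>"
  show "strongly_hyperbolic (cone_edge E) (max 1 \<delta>)"
    unfolding strongly_hyperbolic_def
  proof (intro allI impI)
    fix p q r assume T: "geodesic_triangle (cone_edge E) p q r"
    then have g: "geodesic (cone_edge E) p" "geodesic (cone_edge E) q" "geodesic (cone_edge E) r"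
      and lk: "last p = hd q" "hd r = hd p" "last r = last q"
      unfolding geodesic_triangle_def by auto
    have pp: "is_path (cone_edge E) p" "is_path (cone_edge E) q" "is_path (cone_edge E) r"
      using g unfolding geodesic_def by auto
    have ne: "p \<noteq> []" "q \<noteq> []" "r \<noteq> []" using g geodesic_ne by auto
    show "thin_triangle (cone_edge E) (max 1 \<delta>) p q r"
    proof (cases "last q = None")
      case True
      have "None \<in> set q" using True ne(2) by (metis last_in_set)
      moreover have "None \<in> set r" using True lk(3) ne by (metis last_in_set)
      ultimately show ?thesis unfolding thin_triangle_def
        using in_ball_None[of _ "max 1 \<delta>"] by auto
    next
      case False
      have nq: "None \<notin> set q" using path_None_last[OF pp(2)] False by auto
      have "hd q \<noteq> None" using nq ne by (metis hd_in_set)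
      then have np: "None \<notin> set p" using path_None_last[OF pp(1)] lk(1) by auto
      have nr: "None \<notin> set r" using path_None_last[OF pp(3)] False lk(3) by auto
      define p' where "p' = map the p"
      define q' where "q' = map the q"
      define r' where "r' = map the r"
      have eqs: "p = map Some p'" "q = map Some q'" "r = map Some r'"
        using no_None_map np nq nr unfolding p'_def q'_def r'_def by blast+
      have ne': "p' \<noteq> []" "q' \<noteq> []" "r' \<noteq> []" using ne eqs by auto
      have "geodesic_triangle E p' q' r'"
        using g lk eqs ne' unfolding geodesic_triangle_def
        by (simp add: geodesic_Some hd_map last_map)
      then have "thin_triangle E \<delta> p' q' r'" using H unfolding strongly_hyperbolic_def by blast
      then have "thin_triangle E (max 1 \<delta>) p' q' r'" by (rule thin_mono) simp
      then show ?thesis using eqs thin_Some by metis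
    qed
  qed
next
  assume H: "strongly_hyperbolic (cone_edge E) \<delta>"
  show "strongly_hyperbolic E \<delta>"
    unfolding strongly_hyperbolic_def
  proof (intro allI impI)
    fix p q r assume T: "geodesic_triangle E p q r"
    then have ne: "p \<noteq> []" "q \<noteq> []" "r \<noteq> []" unfolding geodesic_triangle_def
      using geodesic_ne by auto
    have "geodesic_triangle (cone_edge E) (map Some p) (map Some q) (map Some r)"
      using T ne unfolding geodesic_triangle_def by (simp add: geodesic_Some hd_map last_map)
    then have "thin_triangle (cone_edge E) \<delta> (map Some p) (map Some q) (map Some r)"
      using H unfolding strongly_hyperbolic_def by blast
    then show "thin_triangle E \<delta> p q r" using thin_Some by metis
  qed
qed

end
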